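(* Let $X$ be a quasigeodesic metric space (e.g.\ a connected graph with its path metric) which is not coarsely equivalent to any metric space with bounded geometry. Then $h_\infty(X)=\infty$.
   Context: $X$ is quasigeodesic if there are $C\ge1,A\ge0$ such that any $x,x'$ are joined by a map $p\colon[0,d(x,x')]\to X$, $p(0)=x$, $p(d(x,x'))=x'$, with $C^{-1}|s-t|-A\le d(p(s),p(t))\le C|s-t|+A$. Bounded geometry: for every $r>0$ closed balls of radius $r$ have uniformly bounded cardinality. Coarse equivalence: a map $f$ with nondecreasing $\rho_\pm\colon[0,\infty)\to\mathbb R$, $\rho_-(r)\to\infty$, $\rho_-(d(x,x'))\le d(f(x),f(x'))\le\rho_+(d(x,x'))$, and coarsely dense image. Coarse entropy $h_\infty(X)=\lim_{\delta\to\infty}\lim_{R\to\infty}\limsup_{n\to\infty}\frac1n\log s(n,R,\delta,x_0)$, where $s(n,R,\delta,x_0)$ is the supremum of cardinalities of $R$-separated sets of $\delta$-paths $(x_0,\dots,x_n)$ ($d(x_i,x_{i+1})\le\delta$) starting at $x_0$, paths compared by $\max_i d(x_i,y_i)$. *)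

theory Defs
  imports "HOL-Analysis.Analysis"
begin

definition quasigeodesic :: "'a set \<Rightarrow> ('a \<Rightarrow> 'a \<Rightarrow> real) \<Rightarrow> bool" where
  "quasigeodesic M d \<longleftrightarrow>
     (\<exists>C A. C \<ge> 1 \<and> A \<ge> 0 \<and>
       (\<forall>x\<in>M. \<forall>x'\<in>M. \<exists>p :: real \<Rightarrow> 'a.
          p 0 = x \<and> p (d x x') = x' \<and> (\<forall>s\<in>{0..d x x'}. p s \<in> M) \<and>
          (\<forall>s\<in>{0..d x x'}. \<forall>t\<in>{0..d x x'}.
              \<bar>s - t\<bar> / C - A \<le> d (p s) (p t) \<and> d (p s) (p t) \<le> C * \<bar>s - t\<bar> + A)))"

definition bounded_geometry :: "'b set \<Rightarrow> ('b \<Rightarrow> 'b \<Rightarrow> real) \<Rightarrow> bool" where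
  "bounded_geometry Y e \<longleftrightarrow>
     (\<forall>r>0. \<exists>N::nat. \<forall>y\<in>Y. finite {z\<in>Y. e y z \<le> r} \<and> card {z\<in>Y. e y z \<le> r} \<le> N)"

definition coarse_equivalence ::
  "'a set \<Rightarrow> ('a \<Rightarrow> 'a \<Rightarrow> real) \<Rightarrow> 'b set \<Rightarrow> ('b \<Rightarrow> 'b \<Rightarrow> real) \<Rightarrow> ('a \<Rightarrow> 'b) \<Rightarrow> bool" where
  "coarse_equivalence M d Y e f \<longleftrightarrow>
     f \<in> M \<rightarrow> Y \<and>
     (\<exists>\<rho>m \<rho>p :: real \<Rightarrow> real.
        mono_on {0..} \<rho>m \<and> mono_on {0..} \<rho>p \<and> filterlim \<rho>m at_top at_top \<and>
        (\<forall>x\<in>M. \<forall>x'\<in>M. \<rho>m (d x x') \<le> e (f x) (f x') \<and> e (f x) (f x') \<le> \<rho>p (d x x'))) \<and>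
     (\<exists>K. \<forall>y\<in>Y. \<exists>x\<in>M. e y (f x) \<le> K)"

definition delta_paths :: "'a set \<Rightarrow> ('a \<Rightarrow> 'a \<Rightarrow> real) \<Rightarrow> nat \<Rightarrow> real \<Rightarrow> 'a \<Rightarrow> 'a list set" where
  "delta_paths M d n \<delta> x0 =
     {xs. length xs = Suc n \<and> xs ! 0 = x0 \<and> set xs \<subseteq> M \<and>
          (\<forall>i<n. d (xs ! i) (xs ! Suc i) \<le> \<delta>)}"

definition path_dist :: "('a \<Rightarrow> 'a \<Rightarrow> real) \<Rightarrow> 'a list \<Rightarrow> 'a list \<Rightarrow> real" where
  "path_dist d xs ys = Max {d (xs ! i) (ys ! i) | i. i < length xs}"

definition separated_paths ::
  "('a \<Rightarrow> 'a \<Rightarrow> real) \<Rightarrow> real \<Rightarrow> 'a list set \<Rightarrow> bool" where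
  "separated_paths d R S \<longleftrightarrow> (\<forall>p\<in>S. \<forall>q\<in>S. p \<noteq> q \<longrightarrow> path_dist d p q \<ge> R)"

definition sep_count :: "'a set \<Rightarrow> ('a \<Rightarrow> 'a \<Rightarrow> real) \<Rightarrow> nat \<Rightarrow> real \<Rightarrow> real \<Rightarrow> 'a \<Rightarrow> ereal" where
  "sep_count M d n R \<delta> x0 =
     (SUP S \<in> {S. S \<subseteq> delta_paths M d n \<delta> x0 \<and> finite S \<and> separated_paths d R S}. ereal (card S))"

definition eln :: "ereal \<Rightarrow> ereal" where
  "eln s = (if s = \<infinity> then \<infinity> else if s \<le> 0 then -\<infinity> else ereal (ln (real_of_ereal s)))"

definition coarse_entropy :: "'a set \<Rightarrow> ('a \<Rightarrow> 'a \<Rightarrow> real) \<Rightarrow> 'a \<Rightarrow> ereal" where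
  "coarse_entropy M d x0 =
     Lim at_top (\<lambda>\<delta>::real. Lim at_top (\<lambda>R::real.
        limsup (\<lambda>n::nat. ereal (1 / real n) * eln (sep_count M d n R \<delta> x0))))"

end

theory Submission
  imports Defs
begin


lemma net_lemma:
  fixes M :: "'a set" and d :: "'a \<Rightarrow> 'a \<Rightarrow> real"
  assumes MS: "Metric_space M d" and R: "R > 0"
    and H: "\<not> (\<exists>(Y :: ('a \<times> nat) set) e f. Metric_space Y e \<and> bounded_geometry Y e \<and>
                                       coarse_equivalence M d Y e f)"
  shows "\<exists>r>0. \<forall>N. \<exists>y\<in>M. \<exists>F. F \<subseteq> M \<and> finite F \<and> card F = N \<and> (\<forall>z\<in>F. d y z \<le> r)
            \<and> (\<forall>p\<in>F. \<forall>q\<in>F. p \<noteq> q \<longrightarrow> R \<le> d p q)"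
proof -
  interpret Metric_space M d by (rule MS)
  define A where "A = {S. S \<subseteq> M \<and> (\<forall>p\<in>S. \<forall>q\<in>S. p \<noteq> q \<longrightarrow> R \<le> d p q)}"
  have "\<forall>C\<in>chains A. \<Union>C \<in> A"
  proof
    fix C assume C: "C \<in> chains A"
    then have CA: "C \<subseteq> A" and ch: "\<forall>X\<in>C. \<forall>Y\<in>C. X \<subseteq> Y \<or> Y \<subseteq> X"
      unfolding chains_def chain_subset_def by auto
    show "\<Union>C \<in> A" unfolding A_def
    proof (intro CollectI conjI ballI impI)
      show "\<Union>C \<subseteq> M" using CA by (auto simp: A_def)
      fix p q assume pq: "p \<in> \<Union>C" "q \<in> \<Union>C" "p \<noteq> q"
      then obtain X Y where XY: "X\<in>C" "Y\<in>C" "p\<in>X" "q\<in>Y" by blast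
      then have "\<exists>Z\<in>C. p \<in> Z \<and> q \<in> Z" using ch by blast
      then obtain Z where Z: "Z\<in>C" "p\<in>Z" "q\<in>Z" by blast
      have "Z \<in> A" using Z CA by blast
      then show "R \<le> d p q" using Z pq unfolding A_def by blast
    qed
  qed
  then obtain S where SA: "S \<in> A" and Smax: "\<forall>X\<in>A. S \<subseteq> X \<longrightarrow> X = S"
    using Zorn_Lemma by blast
  have SM: "S \<subseteq> M" and Ssep: "\<forall>p\<in>S. \<forall>q\<in>S. p \<noteq> q \<longrightarrow> R \<le> d p q"
    using SA by (auto simp: A_def)
  have dense: "\<exists>s\<in>S. d x s < R" if x: "x \<in> M" for x
  proof (rule ccontr)
    assume nt: "\<not> (\<exists>s\<in>S. d x s < R)"
    then have "\<forall>s\<in>S. R \<le> d x s" by auto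
    then have "insert x S \<in> A" using SM Ssep x commute unfolding A_def by auto
    then have "insert x S = S" using Smax by blast
    then have "x \<in> S" by blast
    then show False using nt x R by auto
  qed
  define g where "g x = (SOME s. s \<in> S \<and> d x s < R)" for x
  have g: "g x \<in> S \<and> d x (g x) < R" if "x \<in> M" for x
    using dense[OF that] unfolding g_def by (metis (mono_tags, lifting) someI_ex)
  define Y :: "('a \<times> nat) set" where "Y = (\<lambda>s. (s, 0)) ` S"
  define e where "e a b = d (fst a) (fst b)" for a b :: "'a \<times> nat"
  define f where "f x = (g x, 0::nat)" for x
  have MSY: "Metric_space Y e"
  proof
    show "\<And>x y. 0 \<le> e x y" by (simp add: e_def)
    show "\<And>x y. e x y = e y x" by (simp add: e_def commute)
    show "e x y = 0 \<longleftrightarrow> x = y" if xy: "x \<in> Y" "y \<in> Y" for x y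
    proof -
      obtain a b where ab: "a \<in> S" "b \<in> S" "x = (a,0)" "y = (b,0)" using xy unfolding Y_def by blast
      then have "a \<in> M" "b \<in> M" using SM by auto
      then show ?thesis using ab by (simp add: e_def)
    qed
    show "e x z \<le> e x y + e y z" if xyz: "x \<in> Y" "y \<in> Y" "z \<in> Y" for x y z
    proof -
      obtain a b c where ab: "a \<in> S" "b \<in> S" "c \<in> S" "x = (a,0)" "y = (b,0)" "z = (c,0)"
        using xyz unfolding Y_def by blast
      then have "a \<in> M" "b \<in> M" "c \<in> M" using SM by auto
      then show ?thesis using ab triangle by (simp add: e_def)
    qed
  qed
  have CE: "coarse_equivalence M d Y e f"
    unfolding coarse_equivalence_def
  proof (intro conjI)
    show "f \<in> M \<rightarrow> Y" using g by (auto simp: f_def Y_def)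
    show "\<exists>K. \<forall>y\<in>Y. \<exists>x\<in>M. e y (f x) \<le> K"
    proof (intro exI[of _ R] ballI)
      fix y assume "y \<in> Y"
      then obtain s where s: "s \<in> S" "y = (s, 0)" unfolding Y_def by blast
      then have sM: "s \<in> M" using SM by auto
      have "e y (f s) = d s (g s)" using s by (simp add: e_def f_def)
      also have "\<dots> \<le> R" using g[OF sM] by simp
      finally show "\<exists>x\<in>M. e y (f x) \<le> R" using sM by blast
    qed
    show "\<exists>\<rho>m \<rho>p :: real \<Rightarrow> real.
        mono_on {0..} \<rho>m \<and> mono_on {0..} \<rho>p \<and> filterlim \<rho>m at_top at_top \<and>
        (\<forall>x\<in>M. \<forall>x'\<in>M. \<rho>m (d x x') \<le> e (f x) (f x') \<and> e (f x) (f x') \<le> \<rho>p (d x x'))"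
    proof (intro exI conjI ballI)
      show "mono_on {0..} (\<lambda>t::real. t + (- 2*R))" by (auto intro: mono_onI)
      show "mono_on {0..} (\<lambda>t::real. t + 2*R)" by (auto intro: mono_onI)
      show "filterlim (\<lambda>t::real. t + (- 2*R)) at_top at_top"
        by (rule filterlim_tendsto_add_at_top[where f="\<lambda>_. - 2 * R", simplified add.commute]) (auto intro: filterlim_ident)
      fix x x' assume xM: "x \<in> M" and x'M: "x' \<in> M"
      have gx: "g x \<in> M" "d x (g x) < R" and gx': "g x' \<in> M" "d x' (g x') < R"
        using g[OF xM] g[OF x'M] SM by auto
      have t1: "d x x' \<le> d x (g x) + d (g x) x'" using triangle xM x'M gx by blast
      have t2: "d (g x) x' \<le> d (g x) (g x') + d (g x') x'" using triangle x'M gx gx' by blast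
      have t3: "d (g x) (g x') \<le> d (g x) x + d x (g x')" using triangle xM gx gx' by blast
      have t4: "d x (g x') \<le> d x x' + d x' (g x')" using triangle xM x'M gx' by blast
      show "d x x' + (- 2 * R) \<le> e (f x) (f x')"
        using t1 t2 gx gx' commute[of "g x'" x'] by (simp add: e_def f_def)
      show "e (f x) (f x') \<le> d x x' + 2 * R"
        using t3 t4 gx gx' commute[of "g x" x] by (simp add: e_def f_def)
    qed
  qed
  have nbg: "\<not> bounded_geometry Y e"
  proof
    assume "bounded_geometry Y e"
    then have "Metric_space Y e \<and> bounded_geometry Y e \<and> coarse_equivalence M d Y e f"
      using MSY CE by simp
    then show False using H by blast
  qed
  then obtain r where r: "r > 0" and nr: "\<not> (\<exists>N::nat. \<forall>y\<in>Y. finite {z\<in>Y. e y z \<le> r} \<and> card {z\<in>Y. e y z \<le> r} \<le> N)"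
    unfolding bounded_geometry_def by blast
  have rN: "\<exists>y\<in>Y. \<not> (finite {z\<in>Y. e y z \<le> r} \<and> card {z\<in>Y. e y z \<le> r} \<le> N)" for N :: nat
    using nr by blast
  show ?thesis
  proof (intro exI[of _ r] conjI allI r)
    fix N :: nat
    obtain y where yY: "y \<in> Y" and ny: "\<not> (finite {z\<in>Y. e y z \<le> r} \<and> card {z\<in>Y. e y z \<le> r} \<le> N)"
      using rN by blast
    obtain B where B: "B \<subseteq> {z\<in>Y. e y z \<le> r}" "finite B" "card B = N"
    proof (cases "finite {z\<in>Y. e y z \<le> r}")
      case True
      then have "N \<le> card {z\<in>Y. e y z \<le> r}" using ny by auto
      then obtain B0 where "B0 \<subseteq> {z\<in>Y. e y z \<le> r}" "card B0 = N" "finite B0"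
        by (rule obtain_subset_with_card_n)
      then show ?thesis using that by blast
    next
      case False
      from infinite_arbitrarily_large[OF False] obtain B0 where
        "finite B0" "card B0 = N" "B0 \<subseteq> {z\<in>Y. e y z \<le> r}" by blast
      then show ?thesis using that by blast
    qed
    have injB: "inj_on fst B" using B(1) by (auto simp: Y_def inj_on_def)
    show "\<exists>y\<in>M. \<exists>F. F \<subseteq> M \<and> finite F \<and> card F = N \<and> (\<forall>z\<in>F. d y z \<le> r)
            \<and> (\<forall>p\<in>F. \<forall>q\<in>F. p \<noteq> q \<longrightarrow> R \<le> d p q)"
    proof (intro bexI[of _ "fst y"] exI[of _ "fst ` B"] conjI)
      show "fst y \<in> M" using yY SM by (auto simp: Y_def)
      show "fst ` B \<subseteq> M" using B(1) SM by (auto simp: Y_def)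
      show "finite (fst ` B)" using B by simp
      show "card (fst ` B) = N" using B card_image[OF injB] by simp
      show "\<forall>z\<in>fst ` B. d (fst y) z \<le> r" using B(1) by (auto simp: e_def)
      show "\<forall>p\<in>fst ` B. \<forall>q\<in>fst ` B. p \<noteq> q \<longrightarrow> R \<le> d p q"
      proof -
        have "fst ` B \<subseteq> S" using B(1) by (auto simp: Y_def)
        then show ?thesis using Ssep by blast
      qed
    qed
  qed
qed


definition pathP :: "'a set \<Rightarrow> ('a \<Rightarrow> 'a \<Rightarrow> real) \<Rightarrow> real \<Rightarrow> (nat \<Rightarrow> 'a) \<Rightarrow> bool" where
  "pathP M d \<delta> g \<longleftrightarrow> (\<forall>i. g i \<in> M) \<and> (\<forall>i. d (g i) (g (Suc i)) \<le> \<delta>)"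

definition cat :: "nat \<Rightarrow> (nat \<Rightarrow> 'a) \<Rightarrow> (nat \<Rightarrow> 'a) \<Rightarrow> nat \<Rightarrow> 'a" where
  "cat L g h = (\<lambda>i. if i < L then g i else h (i - L))"

lemma cat_path:
  assumes "pathP M d \<delta> g" "pathP M d \<delta> h" "g L = h 0"
  shows "pathP M d \<delta> (cat L g h)"
  unfolding pathP_def
proof (intro conjI allI)
  fix i
  show "cat L g h i \<in> M" using assms by (auto simp: cat_def pathP_def)
  show "d (cat L g h i) (cat L g h (Suc i)) \<le> \<delta>"
  proof (cases "Suc i < L")
    case True then show ?thesis using assms by (auto simp: cat_def pathP_def)
  next
    case False
    show ?thesis
    proof (cases "i < L")
      case True
      then have "Suc i = L" using False by auto
      have "d (g i) (g (Suc i)) \<le> \<delta>" using assms(1) by (simp add: pathP_def)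
      moreover have "g (Suc i) = h 0" using assms(3) \<open>Suc i = L\<close> by simp
      moreover have "cat L g h i = g i" "cat L g h (Suc i) = h 0" using True \<open>Suc i = L\<close> by (auto simp: cat_def)
      ultimately show ?thesis by metis
    next
      case False
      then have "Suc i - L = Suc (i - L)" by auto
      then show ?thesis using assms False by (auto simp: cat_def pathP_def)
    qed
  qed
qed

lemma cat_ge: "i \<ge> L \<Longrightarrow> cat L g h i = h (i - L)" by (simp add: cat_def)
lemma cat_lt: "i < L \<Longrightarrow> cat L g h i = g i" by (simp add: cat_def)

lemma qpath:
  assumes MS: "Metric_space M d" and C: "C \<ge> 1" and A: "A \<ge> 0"
    and a: "a \<in> M" and b: "b \<in> M"
    and p0: "p 0 = a" and pD: "p (d a b) = b" and pM: "\<forall>s\<in>{0..d a b}. p s \<in> M"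
    and pup: "\<forall>s\<in>{0..d a b}. \<forall>t\<in>{0..d a b}. d (p s) (p t) \<le> C * \<bar>s - t\<bar> + A"
  shows "\<exists>g. g 0 = a \<and> pathP M d (C + A) g \<and> (\<forall>i\<ge>nat \<lceil>d a b\<rceil>. g i = b)"
proof -
  interpret Metric_space M d by (rule MS)
  define D where "D = d a b"
  define m where "m = nat \<lceil>D\<rceil>"
  define s where "s i = real (min i m) * D / real m" for i
  have D0: "D \<ge> 0" by (simp add: D_def)
  have Dm: "D \<le> real m" unfolding m_def by linarith
  have sD: "s i \<in> {0..D}" for i
  proof (cases "m = 0")
    case True then show ?thesis by (simp add: s_def D0)
  next
    case False
    have "real (min i m) * D \<le> real m * D" using D0 by (intro mult_right_mono) auto
    then show ?thesis using False D0 by (auto simp: s_def field_simps)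
  qed
  have sge: "s i = D" if "i \<ge> m" for i
  proof (cases "m = 0")
    case True then show ?thesis using Dm D0 by (simp add: s_def)
  next
    case False then show ?thesis using that by (simp add: s_def)
  qed
  have sstep: "\<bar>s i - s (Suc i)\<bar> \<le> 1" for i
  proof (cases "i < m")
    case True
    then have "s (Suc i) - s i = D / real m" by (simp add: s_def min_def field_simps)
    moreover have "D / real m \<le> 1" using True Dm by (simp add: divide_le_eq_1)
    moreover have "D / real m \<ge> 0" using D0 by simp
    ultimately show ?thesis by simp
  next
    case False then show ?thesis using sge[of i] sge[of "Suc i"] by simp
  qed
  define g where "g i = p (s i)" for i
  show ?thesis
  proof (intro exI[of _ g] conjI allI impI)
    show "g 0 = a" using p0 by (simp add: g_def s_def)
    show "pathP M d (C + A) g" unfolding pathP_def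
    proof (intro conjI allI)
      fix i
      show "g i \<in> M" using pM sD by (auto simp: g_def D_def)
      have "d (g i) (g (Suc i)) \<le> C * \<bar>s i - s (Suc i)\<bar> + A"
        using pup sD[of i] sD[of "Suc i"] by (auto simp: g_def D_def)
      also have "\<dots> \<le> C * 1 + A" using sstep[of i] C by (intro add_right_mono mult_left_mono) auto
      finally show "d (g i) (g (Suc i)) \<le> C + A" by simp
    qed
    fix i assume "nat \<lceil>d a b\<rceil> \<le> i"
    then show "g i = b" using sge[of i] pD by (simp add: g_def m_def D_def)
  qed
qed

definition word_path :: "nat \<Rightarrow> ('a \<Rightarrow> 'a \<Rightarrow> nat \<Rightarrow> 'a) \<Rightarrow> 'a \<Rightarrow> (nat \<Rightarrow> 'a) \<Rightarrow> nat list \<Rightarrow> nat \<Rightarrow> 'a" where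
  "word_path T pp y z w = foldr (\<lambda>j acc. cat T (pp y (z j)) (cat T (pp (z j) y) acc)) w (\<lambda>i. y)"

lemma word_path_Nil[simp]: "word_path T pp y z [] = (\<lambda>i. y)" by (simp add: word_path_def)
lemma word_path_Cons[simp]: "word_path T pp y z (j # w) = cat T (pp y (z j)) (cat T (pp (z j) y) (word_path T pp y z w))"
  by (simp add: word_path_def)

lemma word_path_props:
  assumes T: "T > 0" and yM: "y \<in> M" and d0: "d y y \<le> \<delta>"
    and hp: "\<forall>j\<in>set w. pathP M d \<delta> (pp y (z j)) \<and> pathP M d \<delta> (pp (z j) y) \<and>
              pp y (z j) 0 = y \<and> pp y (z j) T = z j \<and> pp (z j) y 0 = z j \<and> (\<forall>i\<ge>T. pp (z j) y i = y)"
  shows "pathP M d \<delta> (word_path T pp y z w) \<and> word_path T pp y z w 0 = y \<and>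
         (\<forall>i\<ge>2*T*length w. word_path T pp y z w i = y) \<and>
         (\<forall>b<length w. word_path T pp y z w (2*T*b + T) = z (w!b))"
  using hp
proof (induction w)
  case Nil
  then show ?case using yM d0 by (simp add: pathP_def)
next
  case (Cons j w)
  let ?P = "word_path T pp y z w"
  have IH: "pathP M d \<delta> ?P" "?P 0 = y" "\<forall>i\<ge>2*T*length w. ?P i = y" "\<forall>b<length w. ?P (2*T*b + T) = z (w!b)"
    using Cons by auto
  have hj: "pathP M d \<delta> (pp y (z j))" "pathP M d \<delta> (pp (z j) y)" "pp y (z j) 0 = y"
      "pp y (z j) T = z j" "pp (z j) y 0 = z j" "\<forall>i\<ge>T. pp (z j) y i = y"
    using Cons.prems by auto
  have inner: "pathP M d \<delta> (cat T (pp (z j) y) ?P)"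
    using hj IH by (intro cat_path) auto
  have "pathP M d \<delta> (cat T (pp y (z j)) (cat T (pp (z j) y) ?P))"
    using hj T by (intro cat_path inner) (auto simp: cat_lt)
  moreover have "cat T (pp y (z j)) (cat T (pp (z j) y) ?P) 0 = y" using T hj by (simp add: cat_lt)
  moreover have "\<forall>i\<ge>2*T*length (j#w). cat T (pp y (z j)) (cat T (pp (z j) y) ?P) i = y"
  proof (intro allI impI)
    fix i assume "2*T*length (j#w) \<le> i"
    then have "i \<ge> T" "i - T \<ge> T" "i - T - T \<ge> 2*T*length w" by auto
    then show "cat T (pp y (z j)) (cat T (pp (z j) y) ?P) i = y" using IH by (simp add: cat_ge)
  qed
  moreover have "\<forall>b<length (j#w). cat T (pp y (z j)) (cat T (pp (z j) y) ?P) (2*T*b + T) = z ((j#w)!b)"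
  proof (intro allI impI)
    fix b assume b: "b < length (j#w)"
    show "cat T (pp y (z j)) (cat T (pp (z j) y) ?P) (2*T*b + T) = z ((j#w)!b)"
    proof (cases b)
      case 0 then show ?thesis using hj T by (simp add: cat_ge cat_lt)
    next
      case (Suc b')
      then have "b' < length w" using b by simp
      moreover have "2*T*b + T - T - T = 2*T*b' + T" using Suc by (simp add: algebra_simps)
      moreover have "?P (2*T*b' + T) = z (w!b')" using IH(4) \<open>b' < length w\<close> by blast
      ultimately show ?thesis using Suc by (simp add: cat_ge add.commute)
    qed
  qed
  ultimately show ?case by simp
qed



lemma pathP_mono: "pathP M d \<delta>1 g \<Longrightarrow> \<delta>1 \<le> \<delta>2 \<Longrightarrow> pathP M d \<delta>2 g"
  unfolding pathP_def by (meson order_trans)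

lemma path_dist_ge:
  assumes "i < length xs" shows "d (xs ! i) (ys ! i) \<le> path_dist d xs ys"
proof -
  have eq: "{d (xs ! i) (ys ! i) |i. i < length xs} = (\<lambda>i. d (xs ! i) (ys ! i)) ` {..<length xs}" by auto
  show ?thesis unfolding path_dist_def eq using assms by (intro Max_ge) auto
qed

lemma final_arith:
  fixes s :: ereal and N k n :: nat
  assumes s: "s \<ge> ereal (real N ^ k)" and N: "N \<ge> 2" and n: "n > 0"
    and ck: "c * real n \<le> real k * ln (real N)"
  shows "ereal c \<le> ereal (1 / real n) * eln s"
proof (cases "s = \<infinity>")
  case True
  then show ?thesis using n by (simp add: eln_def)
next
  case False
  have pos: "real N ^ k > 0" using N by simp
  have "1 \<le> real N ^ k" using N by (simp add: one_le_power)
  then obtain v where v: "s = ereal v" "v \<ge> real N ^ k" using s False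
    by (cases s) auto
  have vpos: "v > 0" using v pos by linarith
  have "eln s = ereal (ln v)" using v vpos by (simp add: eln_def)
  moreover have "ln (real N ^ k) \<le> ln v" using v(2) pos vpos ln_le_cancel_iff by blast
  moreover have "ln (real N ^ k) = real k * ln (real N)" using N by (simp add: ln_realpow)
  ultimately have "c * real n \<le> ln v" "eln s = ereal (ln v)" using ck by auto
  then have "c \<le> ln v / real n" using n by (simp add: field_simps)
  then show ?thesis using \<open>eln s = ereal (ln v)\<close> by simp
qed


lemma entropy_inf:
  fixes M :: "'a set" and d :: "'a \<Rightarrow> 'a \<Rightarrow> real"
  assumes MS: "Metric_space M d" and C: "C \<ge> 1" and A: "A \<ge> 0"
    and QG: "\<forall>x\<in>M. \<forall>x'\<in>M. \<exists>p :: real \<Rightarrow> 'a.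
          p 0 = x \<and> p (d x x') = x' \<and> (\<forall>s\<in>{0..d x x'}. p s \<in> M) \<and>
          (\<forall>s\<in>{0..d x x'}. \<forall>t\<in>{0..d x x'}.
              \<bar>s - t\<bar> / C - A \<le> d (p s) (p t) \<and> d (p s) (p t) \<le> C * \<bar>s - t\<bar> + A)"
    and \<delta>: "\<delta> \<ge> C + A" and R: "R > 0"
    and H: "\<not> (\<exists>(Y :: ('a \<times> nat) set) e f. Metric_space Y e \<and> bounded_geometry Y e \<and>
                                       coarse_equivalence M d Y e f)"
    and x0: "x0 \<in> M"
  shows "limsup (\<lambda>n::nat. ereal (1 / real n) * eln (sep_count M d n R \<delta> x0)) = \<infinity>"
proof -
  interpret Metric_space M d by (rule MS)
  define Pg where "Pg a b g \<longleftrightarrow> g 0 = a \<and> pathP M d (C + A) g \<and> (\<forall>i\<ge>nat \<lceil>d a b\<rceil>. g i = b)"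
    for a b and g :: "nat \<Rightarrow> 'a"
  have exPg: "\<exists>g. Pg a b g" if ab: "a \<in> M" "b \<in> M" for a b
  proof -
    obtain p where p: "p 0 = a" "p (d a b) = b" "\<forall>s\<in>{0..d a b}. p s \<in> M"
      and pb: "\<forall>s\<in>{0..d a b}. \<forall>t\<in>{0..d a b}. \<bar>s - t\<bar> / C - A \<le> d (p s) (p t) \<and> d (p s) (p t) \<le> C * \<bar>s - t\<bar> + A"
      using bspec[OF bspec[OF QG ab(1)] ab(2)] by (elim exE conjE) blast
    have p4: "\<forall>s\<in>{0..d a b}. \<forall>t\<in>{0..d a b}. d (p s) (p t) \<le> C * \<bar>s - t\<bar> + A"
      using pb by blast
    show ?thesis unfolding Pg_def using qpath[OF MS C A ab p p4] by blast
  qed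
  define pp where "pp a b = (SOME g. Pg a b g)" for a b
  have pp: "Pg a b (pp a b)" if "a \<in> M" "b \<in> M" for a b
    unfolding pp_def using exPg[OF that] by (rule someI_ex)
  have ppd: "pp a b 0 = a" "pathP M d \<delta> (pp a b)" "\<And>i. i \<ge> nat \<lceil>d a b\<rceil> \<Longrightarrow> pp a b i = b"
    if "a \<in> M" "b \<in> M" for a b
  proof -
    have P: "pp a b 0 = a" "pathP M d (C + A) (pp a b)" "\<forall>i\<ge>nat \<lceil>d a b\<rceil>. pp a b i = b"
      using pp[OF that] unfolding Pg_def by auto
    show "pp a b 0 = a" by (rule P(1))
    show "pathP M d \<delta> (pp a b)" by (rule pathP_mono[OF P(2) \<delta>])
    show "\<And>i. i \<ge> nat \<lceil>d a b\<rceil> \<Longrightarrow> pp a b i = b" using P(3) by blast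
  qed
  obtain r where r: "r > 0" and rN: "\<forall>N. \<exists>y\<in>M. \<exists>F. F \<subseteq> M \<and> finite F \<and> card F = N \<and> (\<forall>z\<in>F. d y z \<le> r)
            \<and> (\<forall>p\<in>F. \<forall>q\<in>F. p \<noteq> q \<longrightarrow> R \<le> d p q)"
    using net_lemma[OF MS R H] by (elim exE conjE) (rule that)
  define T where "T = nat \<lceil>r\<rceil>"
  have T: "T > 0" using r by (simp add: T_def)
  define f where "f n = ereal (1 / real n) * eln (sep_count M d n R \<delta> x0)" for n :: nat
  have "ereal c \<le> limsup f" for c
  proof -
    define c' where "c' = max c 1"
    have c': "c \<le> c'" "c' > 0" by (auto simp: c'_def)
    define N where "N = nat \<lceil>exp (4 * real T * c')\<rceil> + 2"
    have N2: "N \<ge> 2" by (simp add: N_def)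
    have "exp (4 * real T * c') \<le> real N" unfolding N_def by linarith
    then have "ln (exp (4 * real T * c')) \<le> ln (real N)"
      using N2 by (subst ln_le_cancel_iff) auto
    then have lnN: "4 * real T * c' \<le> ln (real N)" by simp
    obtain y F where yM: "y \<in> M" and FM: "F \<subseteq> M" and Ffin: "finite F" and cardF: "card F = N"
      and Fr: "\<forall>z\<in>F. d y z \<le> r" and Fsep: "\<forall>p\<in>F. \<forall>q\<in>F. p \<noteq> q \<longrightarrow> R \<le> d p q"
      using spec[OF rN, of N] by (elim bexE exE conjE) (rule that)
    obtain z where zbij: "bij_betw z {0..<N} F"
      using ex_bij_betw_nat_finite[OF Ffin] cardF by blast
    have zF: "z j \<in> F" if "j < N" for j using zbij that by (auto dest: bij_betw_apply)
    have zinj: "z j \<noteq> z j'" if "j < N" "j' < N" "j \<noteq> j'" for j j'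
      using zbij that unfolding bij_betw_def inj_on_def by auto
    define L where "L = nat \<lceil>d x0 y\<rceil> + 1"
    have L: "L > 0" by (simp add: L_def)
    define G where "G w = cat L (pp x0 y) (word_path T pp y z w)" for w
    have Gprops: "pathP M d \<delta> (G w) \<and> G w 0 = x0 \<and>
        (\<forall>b<length w. G w (L + 2*T*b + T) = z (w!b))" if w: "set w \<subseteq> {..<N}" for w
    proof -
      have hp: "\<forall>j\<in>set w. pathP M d \<delta> (pp y (z j)) \<and> pathP M d \<delta> (pp (z j) y) \<and>
              pp y (z j) 0 = y \<and> pp y (z j) T = z j \<and> pp (z j) y 0 = z j \<and> (\<forall>i\<ge>T. pp (z j) y i = y)"
      proof
        fix j assume "j \<in> set w"
        then have j: "j < N" using w by auto
        have zj: "z j \<in> M" using zF[OF j] FM by auto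
        have dyz: "d y (z j) \<le> r" "d (z j) y \<le> r" using zF[OF j] Fr commute by auto
        have "nat \<lceil>d y (z j)\<rceil> \<le> T" "nat \<lceil>d (z j) y\<rceil> \<le> T" unfolding T_def
          by (rule nat_mono[OF ceiling_mono[OF dyz(1)]], rule nat_mono[OF ceiling_mono[OF dyz(2)]])
        then show "pathP M d \<delta> (pp y (z j)) \<and> pathP M d \<delta> (pp (z j) y) \<and>
              pp y (z j) 0 = y \<and> pp y (z j) T = z j \<and> pp (z j) y 0 = z j \<and> (\<forall>i\<ge>T. pp (z j) y i = y)"
          using ppd[OF yM zj] ppd[OF zj yM] by auto
      qed
      have d0: "d y y \<le> \<delta>" using yM \<delta> C A by simp
      have WP: "pathP M d \<delta> (word_path T pp y z w) \<and> word_path T pp y z w 0 = y \<and>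
         (\<forall>i\<ge>2*T*length w. word_path T pp y z w i = y) \<and>
         (\<forall>b<length w. word_path T pp y z w (2*T*b + T) = z (w!b))"
        by (rule word_path_props[OF T yM d0 hp])
      have "pp x0 y L = y" by (rule ppd(3)[OF x0 yM]) (unfold L_def, rule le_add1)
      then have "pathP M d \<delta> (G w)" unfolding G_def using WP ppd[OF x0 yM] by (intro cat_path) auto
      moreover have "G w 0 = x0" using L ppd[OF x0 yM] by (simp add: G_def cat_lt)
      moreover have "\<forall>b<length w. G w (L + 2*T*b + T) = z (w!b)"
        using WP by (simp add: G_def cat_ge add.assoc)
      ultimately show ?thesis by blast
    qed
    have ev: "ereal c \<le> f n" if n: "n \<ge> 2 * (L + 2 * T) + 1" for n
    proof -
      define k where "k = (n - L) div (2 * T)"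
      define mm where "mm = (n - L) mod (2 * T)"
      have dm: "k * (2*T) + mm = n - L" unfolding k_def mm_def by (rule div_mult_mod_eq)
      have mlt: "mm < 2*T" using T by (simp add: mm_def)
      have e: "2*T*k = k*(2*T)" by (simp add: mult.commute)
      have k1: "2*T*k \<le> n - L" using dm e by linarith
      have k2: "n - L < 2*T*k + 2*T" using dm mlt e by linarith
      have nL: "L \<le> n" using n by simp
      have k4: "n \<le> 4*T*k"
      proof -
        define K where "K = T * k"
        have A1: "n - L < 2*K + 2*T" using k2 by (simp add: K_def mult.assoc)
        have A2: "n < 2*K + 2*T + L" using A1 nL by arith
        have "n \<le> 4*K" using A2 n by arith
        then show ?thesis by (simp add: K_def mult.assoc)
      qed
      define W where "W = {w. set w \<subseteq> {..<N} \<and> length w = k}"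
      define pl where "pl w = map (G w) [0..<Suc n]" for w
      have Wfin: "finite W" unfolding W_def by (simp add: finite_lists_length_eq)
      have cardW: "card W = N ^ k" unfolding W_def using card_lists_length_eq[of "{..<N}" k] by simp
      have diff: "\<exists>i<Suc n. R \<le> d (pl w ! i) (pl w' ! i) \<and> pl w ! i \<noteq> pl w' ! i"
        if ww: "w \<in> W" "w' \<in> W" "w \<noteq> w'" for w w'
      proof -
        have len: "length w = k" "length w' = k" and ws: "set w \<subseteq> {..<N}" "set w' \<subseteq> {..<N}"
          using ww by (auto simp: W_def)
        have "\<exists>b<k. w ! b \<noteq> w' ! b"
        proof (rule ccontr)
          assume "\<not> (\<exists>b<k. w ! b \<noteq> w' ! b)"
          then have "w = w'" using len by (intro nth_equalityI) auto
          then show False using ww(3) by simp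
        qed
        then obtain b where b: "b < k" "w ! b \<noteq> w' ! b" by blast
        have "w ! b \<in> set w" "w' ! b \<in> set w'" using b(1) len by (simp_all add: nth_mem)
        then have wb: "w ! b < N" "w' ! b < N" using ws by blast+
        define i where "i = L + 2*T*b + T"
        have "2*T*b + 2*T \<le> 2*T*k" using b by (metis add.commute mult_Suc_right mult_le_mono2 Suc_leI)
        then have i: "i < Suc n" unfolding i_def using k1 nL T by linarith
        have "pl w ! i = z (w!b)" "pl w' ! i = z (w'!b)"
          using Gprops[OF ws(1)] Gprops[OF ws(2)] i b len by (auto simp: pl_def i_def simp del: upt_Suc)
        moreover have "z (w!b) \<noteq> z (w'!b)" using zinj wb b by auto
        moreover have "R \<le> d (z (w!b)) (z (w'!b))" using Fsep zF wb calculation by auto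
        ultimately show ?thesis using i by auto
      qed
      define S where "S = pl ` W"
      have injpl: "inj_on pl W" unfolding inj_on_def using diff by metis
      have cardS: "card S = N ^ k" unfolding S_def using card_image[OF injpl] cardW by simp
      have finS: "finite S" unfolding S_def using Wfin by simp
      have Ssub: "S \<subseteq> delta_paths M d n \<delta> x0"
      proof
        fix xs assume "xs \<in> S"
        then obtain w where w: "w \<in> W" "xs = pl w" unfolding S_def by blast
        have ws: "set w \<subseteq> {..<N}" using w by (simp add: W_def)
        have gp: "pathP M d \<delta> (G w)" "G w 0 = x0" using Gprops[OF ws] by auto
        show "xs \<in> delta_paths M d n \<delta> x0"
          unfolding delta_paths_def using gp w
          by (auto simp: pl_def pathP_def simp del: upt_Suc)
      qed
      have Ssep: "separated_paths d R S"
        unfolding separated_paths_def S_def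
      proof (intro ballI impI)
        fix p q assume "p \<in> pl ` W" "q \<in> pl ` W" "p \<noteq> q"
        then obtain w w' where "w \<in> W" "w' \<in> W" "p = pl w" "q = pl w'" "w \<noteq> w'" by blast
        then obtain i where i: "i < Suc n" "R \<le> d (pl w ! i) (pl w' ! i)" using diff by blast
        have "i < length (pl w)" using i by (simp add: pl_def)
        then show "R \<le> path_dist d p q"
          using path_dist_ge[of i "pl w" d "pl w'"] i \<open>p = pl w\<close> \<open>q = pl w'\<close> by simp
      qed
      have sc: "ereal (real N ^ k) \<le> sep_count M d n R \<delta> x0"
        unfolding sep_count_def
        using cardS by (intro SUP_upper2[of S]) (use Ssub finS Ssep in auto)
      have "c' * real n \<le> c' * (4 * real T * real k)"
      proof (rule mult_left_mono)
        have "real n \<le> real (4*T*k)" using k4 by (rule of_nat_mono)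
        then show "real n \<le> 4 * real T * real k" by simp
      qed (use c' in simp)
      also have "\<dots> = real k * (4 * real T * c')" by simp
      also have "\<dots> \<le> real k * ln (real N)" using lnN by (intro mult_left_mono) auto
      finally have "c' * real n \<le> real k * ln (real N)" .
      moreover have "c * real n \<le> c' * real n" using c' by (intro mult_right_mono) auto
      ultimately have ck: "c * real n \<le> real k * ln (real N)" by linarith
      show ?thesis unfolding f_def using final_arith[OF sc N2 _ ck] n by simp
    qed
    show ?thesis
    proof (rule le_Limsup)
      show "sequentially \<noteq> bot" by simp
      show "\<forall>\<^sub>F n in sequentially. ereal c \<le> f n"
        unfolding eventually_sequentially using ev by blast
    qed
  qed
  then show ?thesis unfolding f_def[symmetric] by (rule ereal_top)
qed



theorem mainTheorem19:
  fixes M :: "'a set" and d :: "'a \<Rightarrow> 'a \<Rightarrow> real"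
  assumes "Metric_space M d"
    and "quasigeodesic M d"
    and "\<not> (\<exists>(Y :: ('a \<times> nat) set) e f. Metric_space Y e \<and> bounded_geometry Y e \<and>
                                       coarse_equivalence M d Y e f)"
  shows "\<forall>x0\<in>M. coarse_entropy M d x0 = \<infinity>"
proof
  fix x0 assume x0: "x0 \<in> M"
  obtain C A where C: "C \<ge> 1" and A: "A \<ge> 0" and QG: "\<forall>x\<in>M. \<forall>x'\<in>M. \<exists>p :: real \<Rightarrow> 'a.
          p 0 = x \<and> p (d x x') = x' \<and> (\<forall>s\<in>{0..d x x'}. p s \<in> M) \<and>
          (\<forall>s\<in>{0..d x x'}. \<forall>t\<in>{0..d x x'}.
              \<bar>s - t\<bar> / C - A \<le> d (p s) (p t) \<and> d (p s) (p t) \<le> C * \<bar>s - t\<bar> + A)"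
    using assms(2) unfolding quasigeodesic_def by blast
  have inner: "Lim at_top (\<lambda>R::real. limsup (\<lambda>n::nat. ereal (1 / real n) * eln (sep_count M d n R \<delta> x0))) = \<infinity>"
    if \<delta>: "\<delta> \<ge> C + A" for \<delta>
  proof (rule tendsto_Lim[OF trivial_limit_at_top_linorder], rule tendsto_eventually)
    show "\<forall>\<^sub>F R in at_top. limsup (\<lambda>n::nat. ereal (1 / real n) * eln (sep_count M d n R \<delta> x0)) = \<infinity>"
      using eventually_gt_at_top[of "0::real"]
      by eventually_elim (rule entropy_inf[OF assms(1) C A QG \<delta> _ assms(3) x0])
  qed
  show "coarse_entropy M d x0 = \<infinity>"
    unfolding coarse_entropy_def
  proof (rule tendsto_Lim[OF trivial_limit_at_top_linorder], rule tendsto_eventually)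
    show "\<forall>\<^sub>F \<delta> in at_top. Lim at_top (\<lambda>R::real. limsup (\<lambda>n::nat. ereal (1 / real n) * eln (sep_count M d n R \<delta> x0))) = \<infinity>"
      using eventually_ge_at_top[of "C + A"]
      by eventually_elim (rule inner)
  qed
qed

end
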